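(* Let $n\ge1$. (1) If $\mathrm{non}(\mathcal{N})>\mathrm{non}(\mathcal{M})$, then there exists a linear subspace of $\mathbb{R}^n$, considered as a vector space over $\mathbb{Q}$, which belongs to $\mathcal{N}\setminus\mathcal{M}$. (2) If $\mathrm{non}(\mathcal{M})>\mathrm{non}(\mathcal{N})$, then there exists a linear subspace of $\mathbb{R}^n$ over $\mathbb{Q}$ which belongs to $\mathcal{M}\setminus\mathcal{N}$.
   Context: $\mathcal{N}$ is the $\sigma$-ideal of Lebesgue null subsets of $\mathbb{R}^n$, and $\mathcal{M}$ is the $\sigma$-ideal of meager subsets of $\mathbb{R}^n$. For an ideal $\mathcal{I}$, $\mathrm{non}(\mathcal{I})=\min\{|A|:A\subseteq\mathbb{R}^n,\ A\notin\mathcal{I}\}$. *)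

theory Defs
  imports "HOL-Analysis.Analysis"
begin

definition nowhere_dense :: "'a::topological_space set \<Rightarrow> bool" where
  "nowhere_dense S \<longleftrightarrow> interior (closure S) = {}"

definition meager_sets :: "'a::topological_space set set" where
  "meager_sets = {A. \<exists>F. countable F \<and> (\<forall>S\<in>F. nowhere_dense S) \<and> A \<subseteq> \<Union>F}"

definition null_sets_leb :: "'a::euclidean_space set set" where
  "null_sets_leb = null_sets lebesgue"

text \<open>The uniformity non(I): the least cardinality of a set not in I,
  as a cardinal (well-order up to =o). It is the cardinality of a
  non-member A of I of minimal cardinality.\<close>
definition non_card :: "'a set set \<Rightarrow> 'a rel" where
  "non_card I = card_of (SOME A. A \<notin> I \<and> (\<forall>B. B \<notin> I \<longrightarrow> (card_of A, card_of B) \<in> ordLeq))"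

definition rat_subspace :: "'a::real_vector set \<Rightarrow> bool" where
  "rat_subspace V \<longleftrightarrow> 0 \<in> V \<and> (\<forall>x\<in>V. \<forall>y\<in>V. x + y \<in> V)
     \<and> (\<forall>q\<in>\<rat>. \<forall>x\<in>V. q *\<^sub>R x \<in> V)"

end

theory Submission imports Defs begin
unbundle cardinal_syntax

lemma non_card_spec:
  assumes "\<exists>A. A \<notin> I"
  shows "\<exists>A. non_card I = |A| \<and> A \<notin> I \<and> (\<forall>B. B \<notin> I \<longrightarrow> |A| \<le>o |B| )"
proof -
  let ?R = "{ |B| | B. B \<notin> I}"
  have "?R \<noteq> {}" using assms by auto
  then obtain r where "r \<in> ?R" "\<forall>r'\<in>?R. r \<le>o r'"
  proof -
    have "\<exists>r\<in>?R. \<forall>r'\<in>?R. r \<le>o r'"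
      by (rule exists_minim_Well_order) (use \<open>?R \<noteq> {}\<close> in \<open>auto simp: card_of_Well_order\<close>)
    thus ?thesis using that by blast
  qed
  then obtain A where "A \<notin> I" "\<forall>B. B \<notin> I \<longrightarrow> |A| \<le>o |B|" by auto
  hence ex: "\<exists>A. A \<notin> I \<and> (\<forall>B. B \<notin> I \<longrightarrow> (card_of A, card_of B) \<in> ordLeq)" by blast
  show ?thesis unfolding non_card_def using someI_ex[OF ex] by blast
qed

lemma below_non_card:
  assumes "\<exists>A. A \<notin> I" "|B| <o non_card I"
  shows "B \<in> I"
  using non_card_spec[OF assms(1)] assms(2) not_ordLess_ordLeq by metis

fun qsp :: "'a::real_vector set \<Rightarrow> nat \<Rightarrow> 'a set" where
  "qsp A 0 = {0}"
| "qsp A (Suc n) = (\<lambda>(v,(q,a)). v + of_rat q *\<^sub>R a) ` (qsp A n \<times> (UNIV \<times> A))"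

definition qspan :: "'a::real_vector set \<Rightarrow> 'a set" where
  "qspan A = (\<Union>n. qsp A n)"

lemma qsp_add: "x \<in> qsp A n \<Longrightarrow> y \<in> qsp A m \<Longrightarrow> x + y \<in> qsp A (n + m)"
proof (induction m arbitrary: y)
  case 0 thus ?case by simp
next
  case (Suc m)
  then obtain v q a where "v \<in> qsp A m" "a \<in> A" "y = v + of_rat q *\<^sub>R a" by auto
  with Suc.IH[OF Suc.prems(1) this(1)] show ?case
    by (force simp: add.assoc intro!: image_eqI[where x="(x+v,(q,a))"])
qed

lemma qsp_scale: "x \<in> qsp A n \<Longrightarrow> of_rat r *\<^sub>R x \<in> qsp A n"
proof (induction n arbitrary: x)
  case 0 thus ?case by simp
next
  case (Suc n)
  then obtain v q a where "v \<in> qsp A n" "a \<in> A" "x = v + of_rat q *\<^sub>R a" by auto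
  with Suc.IH[OF this(1)] show ?case
    by (force simp: scaleR_add_right of_rat_mult intro!: image_eqI[where x="(of_rat r *\<^sub>R v,(r*q,a))"])
qed

lemma qspan_sub: "rat_subspace (qspan A)"
  unfolding rat_subspace_def qspan_def
proof (intro conjI ballI)
  show "0 \<in> (\<Union>n. qsp A n)" using qsp.simps(1) by blast
next
  fix x y assume "x \<in> (\<Union>n. qsp A n)" "y \<in> (\<Union>n. qsp A n)"
  thus "x + y \<in> (\<Union>n. qsp A n)" using qsp_add by blast
next
  fix q x assume "q \<in> (\<rat>::real set)" "x \<in> (\<Union>n. qsp A n)"
  then obtain r where "q = of_rat r" by (auto elim: Rats_cases)
  thus "q *\<^sub>R x \<in> (\<Union>n. qsp A n)" using qsp_scale \<open>x \<in> _\<close> by blast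
qed

lemma qspan_supset: "A \<subseteq> qspan A"
proof
  fix a assume "a \<in> A"
  hence "a \<in> qsp A (Suc 0)" by (auto intro!: image_eqI[where x="(0,(1,a))"])
  thus "a \<in> qspan A" unfolding qspan_def by (rule UN_I[OF UNIV_I])
qed

lemma qspan_card:
  assumes "infinite A"
  shows "|qspan A| \<le>o |A|"
proof -
  have nat: "|UNIV::nat set| \<le>o |A|" using assms infinite_iff_card_of_nat by blast
  have rat: "|UNIV::rat set| \<le>o |A|"
  proof -
    have "|UNIV::rat set| \<le>o |UNIV::nat set|"
      using card_of_ordLeq[of "UNIV::rat set" "UNIV::nat set"] inj_to_nat by blast
    thus ?thesis using nat ordLeq_transitive by blast
  qed
  have "|(UNIV::rat set) \<times> A| \<le>o |A|"
    by (intro card_of_Times_ordLeq_infinite_Field) (auto simp: Field_card_of card_of_card_order_on rat assms card_of_mono1)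
  have "|qsp A n| \<le>o |A|" for n
  proof (induction n)
    case 0
    obtain a where "a \<in> A" using assms infinite_imp_nonempty by blast
    hence "inj_on (\<lambda>_. a) {0::'a} \<and> (\<lambda>_. a) ` {0::'a} \<subseteq> A" by auto
    hence "|{0::'a}| \<le>o |A|" using card_of_ordLeq by blast
    thus ?case by simp
  next
    case (Suc n)
    have "|qsp A n \<times> ((UNIV::rat set) \<times> A)| \<le>o |A|"
      using card_of_Times_ordLeq_infinite_Field[OF _ Suc \<open>|(UNIV::rat set) \<times> A| \<le>o |A|\<close> card_of_Card_order] assms
      by (simp add: Field_card_of)
    thus ?case using card_of_image ordLeq_transitive by (metis qsp.simps(2))
  qed
  thus ?thesis unfolding qspan_def
    using card_of_UNION_ordLeq_infinite[OF assms, of UNIV] nat by blast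
qed

lemma generic:
  fixes I J :: "'a::real_vector set set"
  assumes I: "\<exists>A. A \<notin> I" and J: "\<exists>A. A \<notin> J"
    and finI: "\<And>B. finite B \<Longrightarrow> B \<in> I"
    and subI: "\<And>B C. B \<in> I \<Longrightarrow> C \<subseteq> B \<Longrightarrow> C \<in> I"
    and lt: "(non_card I, non_card J) \<in> ordLess"
  shows "\<exists>V. rat_subspace V \<and> V \<in> J \<and> V \<notin> I"
proof -
  obtain A where A: "non_card I = |A|" "A \<notin> I" using non_card_spec[OF I] by blast
  have "infinite A" using A(2) finI by blast
  hence c1: "|qspan A| \<le>o |A|" by (rule qspan_card)
  have c2: "|A| <o non_card J" using lt A(1) by simp
  have "|qspan A| <o non_card J" by (rule ordLeq_ordLess_trans[OF c1 c2])
  hence "qspan A \<in> J" using below_non_card[OF J] by blast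
  moreover have "qspan A \<notin> I" using subI qspan_supset A(2) by blast
  ultimately show ?thesis using qspan_sub by blast
qed

lemma meager_sub: "B \<in> meager_sets \<Longrightarrow> C \<subseteq> B \<Longrightarrow> C \<in> meager_sets"
  unfolding meager_sets_def mem_Collect_eq by (meson subset_trans)

lemma meager_finite:
  fixes B :: "'a::{real_normed_vector,perfect_space} set"
  assumes "finite B" shows "B \<in> meager_sets"
  unfolding meager_sets_def
proof (intro CollectI exI conjI)
  show "countable ((\<lambda>x. {x}) ` B)" using assms by (simp add: countable_finite)
  show "\<forall>S\<in>(\<lambda>x. {x}) ` B. nowhere_dense S" by (auto simp: nowhere_dense_def)
  show "B \<subseteq> \<Union>((\<lambda>x. {x}) ` B)" by auto
qed

lemma UNIV_not_meager: "(UNIV :: (real^'n) set) \<notin> meager_sets"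
proof
  assume "(UNIV :: (real^'n) set) \<in> meager_sets"
  then obtain F where F: "countable F" "\<forall>S\<in>F. nowhere_dense S" "(UNIV :: (real^'n) set) \<subseteq> \<Union>F"
    unfolding meager_sets_def by blast
  let ?G = "(\<lambda>T. - closure T) ` F"
  have "(UNIV :: (real^'n) set) \<subseteq> closure (\<Inter>?G)"
  proof (rule Baire)
    show "countable ?G" using F(1) by simp
    fix T assume "T \<in> ?G"
    then obtain S where S: "S \<in> F" "T = - closure S" by blast
    have "closure T = UNIV" using S F(2) by (simp add: closure_complement nowhere_dense_def)
    thus "openin (top_of_set UNIV) T \<and> UNIV \<subseteq> closure T" using S by auto
  qed simp
  hence "\<Inter>?G \<noteq> {}" by auto
  then obtain x where x: "x \<in> \<Inter>?G" by blast
  then obtain S where "S \<in> F" "x \<in> S" using F(3) by blast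
  moreover have "x \<in> - closure S" using x \<open>S \<in> F\<close> by blast
  ultimately show False using closure_subset[of S] by blast
qed

lemma null_leb_sub: "B \<in> null_sets_leb \<Longrightarrow> C \<subseteq> B \<Longrightarrow> C \<in> null_sets_leb"
  unfolding null_sets_leb_def using negligible_subset negligible_iff_null_sets by metis

lemma null_leb_finite: "finite B \<Longrightarrow> B \<in> null_sets_leb"
  unfolding null_sets_leb_def using negligible_finite negligible_iff_null_sets by metis

lemma UNIV_not_null: "(UNIV :: 'a::euclidean_space set) \<notin> null_sets_leb"
  unfolding null_sets_leb_def using non_negligible_UNIV negligible_iff_null_sets by metis

theorem theorem2p3:
  shows "((non_card (meager_sets :: (real^'n) set set), non_card (null_sets_leb :: (real^'n) set set)) \<in> ordLess
           \<longrightarrow> (\<exists>V :: (real^'n) set. rat_subspace V \<and> V \<in> null_sets_leb \<and> V \<notin> meager_sets))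
       \<and> ((non_card (null_sets_leb :: (real^'n) set set), non_card (meager_sets :: (real^'n) set set)) \<in> ordLess
           \<longrightarrow> (\<exists>V :: (real^'n) set. rat_subspace V \<and> V \<in> meager_sets \<and> V \<notin> null_sets_leb))"
proof (intro conjI impI)
  have M: "\<exists>A. A \<notin> (meager_sets :: (real^'n) set set)" using UNIV_not_meager by blast
  have N: "\<exists>A. A \<notin> (null_sets_leb :: (real^'n) set set)" using UNIV_not_null by blast
  show "\<exists>V :: (real^'n) set. rat_subspace V \<and> V \<in> null_sets_leb \<and> V \<notin> meager_sets"
    if "(non_card (meager_sets :: (real^'n) set set), non_card (null_sets_leb :: (real^'n) set set)) \<in> ordLess"
    by (rule generic[OF M N meager_finite meager_sub that])
  show "\<exists>V :: (real^'n) set. rat_subspace V \<and> V \<in> meager_sets \<and> V \<notin> null_sets_leb"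
    if "(non_card (null_sets_leb :: (real^'n) set set), non_card (meager_sets :: (real^'n) set set)) \<in> ordLess"
    by (rule generic[OF N M null_leb_finite null_leb_sub that])
qed

end
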